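(* Let $f$ be a generalized polynomial and let $D$ be a nonconstant complex polynomial. For each $a\in\mathbb{C}$ let $\mu_a$ be the multiplicity of $a$ as a root of $D$. Then there is a unique pair $(q,R)$ such that $q$ is a generalized polynomial, $R$ is a complex polynomial of degree $<\deg D$, and $f=D\,q+R$. Moreover $R$ is given by the Taylor–Gauss Formula $$R(X)=\sum_{D(a)=0}\ J_a^{\mu_a-1}\!\left(f(X)\,\frac{(X-a)^{\mu_a}}{D(X)}\right)\frac{D(X)}{(X-a)^{\mu_a}}.$$
   Context: For $a\in\mathbb{C}$, a Laurent series in $X-a$ is a formal sum $\sum_{n\in\mathbb{Z}} f_{a,n}(X-a)^n$ with complex coefficients, only finitely many nonzero coefficients of negative index; these form a field $\mathbb{C}((X-a))$. A generalized rational fraction is a family $f=(f_a)_{a\in\mathbb{C}}$ with $f_a\in\mathbb{C}((X-a))$; such families are added, multiplied and differentiated componentwise. A complex polynomial $P$ is identified with the family $\big(\sum_{n\ge0}\frac{P^{(n)}(a)}{n!}(X-a)^n\big)_{a\in\mathbb{C}}$ of its Taylor expansions; a nonzero polynomial is invertible in this ring, so $f/D$ makes sense. A generalized polynomial is a generalized rational fraction $f$ with $f_a\in\mathbb{C}[[X-a]]$ for all $a$ ("$f$ is defined at every point"). For a generalized rational fraction $f$, $a\in\mathbb{C}$ and $k\in\mathbb{Z}$, $J_a^{k}(f):=\sum_{n\le k} f_{a,n}(X-a)^n$ (the order-$k$ expansion of $f$ at $a$); when $f$ is defined at $a$ and $k\ge 0$ this is a polynomial of degree $\le k$. *)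

theory Defs
  imports "HOL-Computational_Algebra.Computational_Algebra"
begin

text \<open>A generalized rational fraction: a family of Laurent series, the component at a
  being read as a Laurent series in (X - a).\<close>
type_synonym gen_frac = "complex \<Rightarrow> complex fls"

text \<open>A complex polynomial P viewed as the family of its Taylor expansions:
  the coefficient of (X-a)^n is P^(n)(a)/n!.\<close>
definition poly_to_gen :: "complex poly \<Rightarrow> gen_frac" where
  "poly_to_gen P = (\<lambda>a. fps_to_fls (Abs_fps (\<lambda>n. poly ((pderiv ^^ n) P) a / fact n)))"

definition gen_poly :: "gen_frac \<Rightarrow> bool" where
  "gen_poly f \<longleftrightarrow> (\<forall>a. \<forall>n::int. n < 0 \<longrightarrow> fls_nth (f a) n = 0)"

definition jet_poly :: "complex \<Rightarrow> nat \<Rightarrow> gen_frac \<Rightarrow> complex poly" where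
  "jet_poly a k f = (\<Sum>n\<le>k. smult (fls_nth (f a) (int n)) ([:-a, 1:] ^ n))"

definition taylor_gauss :: "gen_frac \<Rightarrow> complex poly \<Rightarrow> complex poly" where
  "taylor_gauss f D =
     (\<Sum>a\<in>{a. poly D a = 0}.
        jet_poly a (order a D - 1)
          (\<lambda>b. f b * poly_to_gen ([:-a, 1:] ^ order a D) b / poly_to_gen D b)
        * (D div [:-a, 1:] ^ order a D))"

end

theory Submission
  imports Defs
begin

definition G :: "complex \<Rightarrow> complex poly \<Rightarrow> complex fls" where
  "G a P = fps_to_fls (fps_of_poly (pcompose P [:a,1:]))"

lemma pderiv_funpow_pcompose:
  "(pderiv ^^ n) (pcompose P [:a,1:]) = pcompose ((pderiv ^^ n) P) [:a,1:]"
  by (induction n) (simp_all add: pderiv_pcompose pderiv_pCons)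

lemma coeff_funpow_pderiv0:
  "coeff ((pderiv ^^ n) Q) 0 = fact n * coeff (Q::complex poly) n"
proof (induction n arbitrary: Q)
  case 0 then show ?case by simp
next
  case (Suc n)
  have "coeff ((pderiv ^^ Suc n) Q) 0 = coeff ((pderiv ^^ n) (pderiv Q)) 0"
    by (simp only: funpow_Suc_right o_def)
  also have "\<dots> = fact n * coeff (pderiv Q) n" by (rule Suc)
  also have "\<dots> = fact (Suc n) * coeff Q (Suc n)"
    by (simp add: coeff_pderiv algebra_simps)
  finally show ?case .
qed

lemma poly_to_gen_G: "poly_to_gen P a = G a P"
proof -
  have "Abs_fps (\<lambda>n. poly ((pderiv ^^ n) P) a / fact n) = fps_of_poly (pcompose P [:a,1:])"
  proof (rule fps_ext)
    fix n
    have "poly ((pderiv ^^ n) P) a = poly (pcompose ((pderiv ^^ n) P) [:a,1:]) 0"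
      by (simp add: poly_pcompose)
    also have "\<dots> = coeff ((pderiv ^^ n) (pcompose P [:a,1:])) 0"
      by (simp add: pderiv_funpow_pcompose poly_0_coeff_0)
    also have "\<dots> = fact n * coeff (pcompose P [:a,1:]) n" by (rule coeff_funpow_pderiv0)
    finally show "Abs_fps (\<lambda>n. poly ((pderiv ^^ n) P) a / fact n) $ n = fps_of_poly (pcompose P [:a,1:]) $ n"
      by simp
  qed
  then show ?thesis unfolding poly_to_gen_def G_def by simp
qed

lemma G_add: "G a (P + Q) = G a P + G a Q"
  by (simp add: G_def pcompose_add fps_of_poly_add)
lemma G_diff: "G a (P - Q) = G a P - G a Q"
  by (simp add: G_def pcompose_diff fps_of_poly_diff)
lemma G_mult: "G a (P * Q) = G a P * G a Q"
  by (simp add: G_def pcompose_mult fps_of_poly_mult fls_times_fps_to_fls)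
lemma G_sum: "G a (sum f A) = (\<Sum>x\<in>A. G a (f x))"
proof (induction A rule: infinite_finite_induct)
  case (insert x F) then show ?case by (simp add: G_add)
qed (simp_all add: G_def)

lemma pcompose_power_gen: "pcompose (p ^ n) r = (pcompose p r) ^ n"
  by (induction n) (simp_all add: pcompose_mult pcompose_1)

lemma G_nz: "P \<noteq> 0 \<Longrightarrow> G a P \<noteq> 0"
  by (simp add: G_def pcompose_eq_0_iff fps_of_poly_eq_iff[of _ 0, simplified])

lemma order_pcompose_le:
  assumes "P \<noteq> 0"
  shows "order (b + c) P \<le> order b (pcompose P [:c, 1::complex:])"
proof -
  have "[:-(b+c),1:] ^ order (b+c) P dvd P" by (rule order_1)
  then obtain Q where Q: "P = [:-(b+c),1:] ^ order (b+c) P * Q" by blast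
  have l: "pcompose [:-b-c,1:] [:c,1:] = [:-b, 1:]"
    by (simp add: pcompose_pCons)
  have "pcompose P [:c,1:] = [:-b,1:] ^ order (b+c) P * pcompose Q [:c,1:]"
    by (subst Q) (simp add: pcompose_mult pcompose_power_gen l)
  then have "[:-b,1:] ^ order (b+c) P dvd pcompose P [:c,1:]" by simp
  moreover have "pcompose P [:c,1:] \<noteq> 0" using assms by (simp add: pcompose_eq_0_iff)
  ultimately show ?thesis by (simp add: order_divides)
qed

lemma order_pcompose: "P \<noteq> 0 \<Longrightarrow> order 0 (pcompose P [:a,1::complex:]) = order a P"
proof -
  assume P: "P \<noteq> 0"
  have 1: "order a P \<le> order 0 (pcompose P [:a,1:])"
    using order_pcompose_le[OF P, of 0 a] by simp
  have P': "pcompose P [:a,1:] \<noteq> 0" using P by (simp add: pcompose_eq_0_iff)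
  have "pcompose (pcompose P [:a,1:]) [:-a,1:] = P"
    by (simp add: pcompose_assoc[symmetric] pcompose_pCons)
  then have 2: "order 0 (pcompose P [:a,1:]) \<le> order a P"
    using order_pcompose_le[OF P', of a "-a"] by simp
  from 1 2 show ?thesis by simp
qed

lemma subdegree_G: "P \<noteq> 0 \<Longrightarrow> fls_subdegree (G a P) = int (order a P)"
  by (simp add: G_def fls_subdegree_fls_to_fps subdegree_fps_of_poly pcompose_eq_0_iff order_pcompose)

definition vz :: "int \<Rightarrow> complex fls \<Rightarrow> bool" where
  "vz m x \<longleftrightarrow> (\<forall>n<m. fls_nth x n = 0)"

lemma vz_iff: "vz m x \<longleftrightarrow> x = 0 \<or> m \<le> fls_subdegree x"
  unfolding vz_def using fls_subdegree_geI[of x m] fls_eq0_below_subdegree[of _ x]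
  by (metis fls_zero_nth order_less_le_trans)

lemma vz_add: "vz m x \<Longrightarrow> vz m y \<Longrightarrow> vz m (x + y)"
  by (simp add: vz_def)
lemma vz_diff: "vz m x \<Longrightarrow> vz m y \<Longrightarrow> vz m (x - y)"
  by (simp add: vz_def)
lemma vz_zero: "vz m 0" by (simp add: vz_def)
lemma vz_sum: "(\<And>i. i \<in> A \<Longrightarrow> vz m (f i)) \<Longrightarrow> vz m (sum f A)"
  by (simp add: vz_def fls_nth_sum)
lemma vz_mult: "vz m x \<Longrightarrow> vz k y \<Longrightarrow> vz (m + k) (x * y)"
  by (cases "x = 0 \<or> y = 0") (auto simp: vz_iff)
lemma vz_G0: "vz 0 (G a P)"
  by (simp add: vz_def G_def)
lemma vz_G: "vz (int (order a P)) (G a P)"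
  by (cases "P = 0") (simp add: G_def vz_zero, simp add: vz_iff subdegree_G)


lemma order_dvd_complex:
  fixes D S :: "complex poly"
  assumes "D \<noteq> 0" "S \<noteq> 0" "\<forall>c. order c D \<le> order c S"
  shows "D dvd S"
  using assms
proof (induction "degree D" arbitrary: D S)
  case 0
  then obtain d where d: "D = [:d:]" by (metis degree_0_id)
  then have "d \<noteq> 0" using "0.prems"(1) by auto
  then show ?case using d by (simp add: const_poly_dvd_iff dvd_field_iff)
next
  case (Suc n)
  then have "\<not> constant (poly D)"
    by (metis constant_degree nat.distinct(1))
  then obtain a where a: "poly D a = 0" using fundamental_theorem_of_algebra by blast
  have Dnz: "D \<noteq> 0" using Suc.prems by auto
  obtain D' where D': "D = [:-a,1:] * D'" using a by (metis poly_eq_0_iff_dvd dvdE)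
  have "order a D > 0" using a Dnz order_gt_0_iff by blast
  then have "order a S > 0" using Suc.prems(3) by (metis less_le_trans)
  then have "poly S a = 0" using Suc.prems(2) order_gt_0_iff by blast
  then obtain S' where S': "S = [:-a,1:] * S'" by (metis poly_eq_0_iff_dvd dvdE)
  have D'nz: "D' \<noteq> 0" using D' Dnz by auto
  have S'nz: "S' \<noteq> 0" using S' Suc.prems(2) by auto
  have "degree D = degree [:-a,1:] + degree D'" unfolding D' by (rule degree_mult_eq) (simp_all add: D'nz)
  then have "degree D = Suc (degree D')" by simp
  then have degD': "n = degree D'" using Suc.hyps by simp
  have "order c D' \<le> order c S'" for c
  proof -
    have "order c D = order c [:-a,1:] + order c D'" using D' Dnz order_mult by metis
    moreover have "order c S = order c [:-a,1:] + order c S'" using S' Suc.prems(2) order_mult by metis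
    ultimately show ?thesis using Suc.prems(3) by (metis add_le_cancel_left)
  qed
  then have "D' dvd S'" using Suc.hyps(1)[OF degD' D'nz S'nz] by blast
  then show ?case unfolding D' S' by (rule mult_dvd_mono[OF dvd_refl])
qed

lemma degree_jet: "degree (jet_poly a k h) \<le> k"
  unfolding jet_poly_def
  by (rule degree_sum_le) (auto intro: order_trans[OF degree_smult_le] simp: degree_linear_power)

lemma pcompose_jet: "pcompose (jet_poly a k h) [:a,1:] = (\<Sum>n\<le>k. monom (fls_nth (h a) (int n)) n)"
proof -
  have "pcompose ([:-a,1:] ^ n) [:a,1:] = monom 1 n" for n
    by (simp add: pcompose_power_gen pcompose_pCons monom_altdef)
  then show ?thesis
    unfolding jet_poly_def by (simp add: pcompose_sum pcompose_smult smult_monom)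
qed

lemma G_jet_nth:
  assumes "0 \<le> n" "n \<le> int k"
  shows "fls_nth (G a (jet_poly a k h)) n = fls_nth (h a) n"
proof -
  have "fls_nth (G a (jet_poly a k h)) n = coeff (\<Sum>m\<le>k. monom (fls_nth (h a) (int m)) m) (nat n)"
    using assms by (simp add: G_def pcompose_jet)
  also have "\<dots> = (\<Sum>m\<le>k. if m = nat n then fls_nth (h a) (int m) else 0)"
    by (simp add: coeff_sum)
  also have "\<dots> = fls_nth (h a) n" using assms by (simp add: sum.delta)
  finally show ?thesis .
qed


lemma G_lin_pow: "G b ([:-b,1:]^n) = fls_X^n"
  by (simp add: G_def pcompose_power_gen pcompose_pCons fps_of_poly_power fps_to_fls_power)

theorem mainTheorem1:
  fixes f :: gen_frac and D :: "complex poly"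
  assumes "gen_poly f" and "degree D > 0"
  shows "(\<exists>!(q, R). gen_poly q \<and> degree R < degree D \<and>
             (\<forall>a. f a = poly_to_gen D a * q a + poly_to_gen R a))
         \<and> (\<forall>q R. gen_poly q \<and> degree R < degree D \<and>
             (\<forall>a. f a = poly_to_gen D a * q a + poly_to_gen R a)
             \<longrightarrow> R = taylor_gauss f D)"
proof -
  have Dnz: "D \<noteq> 0" using assms(2) by auto
  define Z where "Z = {a. poly D a = 0}"
  have finZ: "finite Z" unfolding Z_def using poly_roots_finite[OF Dnz] .
  define mu where "mu a = order a D" for a
  define E where "E a = D div [:-a,1:]^mu a" for a
  have DE: "D = [:-a,1:]^mu a * E a" for a
    unfolding E_def mu_def by (rule dvd_mult_div_cancel[OF order_1, symmetric])
  have Enz: "E a \<noteq> 0" for a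
  proof
    assume "E a = 0"
    then have "D = 0" by (subst DE[of a]) simp
    then show False using Dnz by simp
  qed
  have ordD: "order b D = order b ([:-a,1:]^mu a) + order b (E a)" for a b
  proof -
    have "[:-a,1:]^mu a * E a \<noteq> 0" using Enz[of a] by simp
    then show ?thesis by (subst DE[of a]) (rule order_mult)
  qed
  have EordA: "order a (E a) = 0" for a
    using ordD[of a a] by (simp add: order_power_n_n mu_def)
  have EordB: "order b (E a) = mu b" if "b \<noteq> a" for a b
  proof -
    have "poly ([:-a,1:]^mu a) b \<noteq> 0" using that by simp
    then have "order b ([:-a,1:]^mu a) = 0" by (rule order_0I)
    then show ?thesis using ordD[of b a] by (simp add: mu_def)
  qed
  have mupos: "mu a \<ge> 1" if "a \<in> Z" for a
    using that order_gt_0_iff[OF Dnz, of a] unfolding Z_def mu_def by simp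
  have mu0: "mu a = 0" if "a \<notin> Z" for a
    using that by (simp add: Z_def mu_def order_0I)
  define g where "g a = (\<lambda>b. f b * poly_to_gen ([:-a,1:]^mu a) b / poly_to_gen D b)" for a
  define tm where "tm a = jet_poly a (mu a - 1) (g a) * E a" for a
  define R0 where "R0 = taylor_gauss f D"
  have R0_eq: "R0 = sum tm Z"
    by (simp add: R0_def taylor_gauss_def tm_def g_def mu_def E_def Z_def)
  have f0: "vz 0 (f c)" for c using assms(1) by (simp add: gen_poly_def vz_def)
  have degD: "degree D = mu a + degree (E a)" for a
  proof -
    have "degree ([:-a,1:]^mu a * E a) = degree ([:-a,1:]^mu a) + degree (E a)"
      by (rule degree_mult_eq) (simp_all add: Enz)
    then show ?thesis using DE[of a] by (simp add: degree_linear_power)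
  qed
  have degtm: "degree (tm a) \<le> degree D - 1" if "a \<in> Z" for a
  proof -
    have "degree (tm a) \<le> degree (jet_poly a (mu a - 1) (g a)) + degree (E a)"
      unfolding tm_def by (rule degree_mult_le)
    also have "\<dots> \<le> (mu a - 1) + degree (E a)" using degree_jet by simp
    finally show ?thesis using degD[of a] mupos[OF that] by simp
  qed
  have degR0: "degree R0 < degree D"
  proof -
    have "degree R0 \<le> degree D - 1" unfolding R0_eq by (rule degree_sum_le[OF finZ degtm])
    then show ?thesis using assms(2) by simp
  qed
  have cong: "vz (int (mu b)) (f b - G b R0)" for b
  proof (cases "b \<in> Z")
    case False
    then show ?thesis using mu0[OF False] vz_diff[OF f0 vz_G0] by simp
  next
    case True
    define U where "U = G b (E b)"
    have Unz: "U \<noteq> 0" unfolding U_def by (rule G_nz[OF Enz])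
    have Usub: "vz 0 U" unfolding U_def by (rule vz_G0)
    have Usd: "fls_subdegree U = 0" unfolding U_def using subdegree_G[OF Enz] EordA by simp
    have GD: "G b D = fls_X^mu b * U"
      unfolding U_def by (subst DE[of b]) (simp add: G_mult G_lin_pow)
    have Xnz: "(fls_X::complex fls)^mu b \<noteq> 0" by simp
    have gb: "g b b = f b / U"
      unfolding g_def poly_to_gen_G G_lin_pow GD using Xnz Unz by (simp add: field_simps)
    have vzg: "vz 0 (g b b)"
    proof (cases "f b = 0")
      case True then show ?thesis by (simp add: gb vz_zero)
    next
      case False
      then have "0 \<le> fls_subdegree (f b)" using f0[of b] by (simp add: vz_iff)
      then show ?thesis using False Unz Usd by (simp add: gb vz_iff fls_divide_subdegree)
    qed
    define J where "J = jet_poly b (mu b - 1) (g b)"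
    have vzJ: "vz (int (mu b)) (g b b - G b J)"
      unfolding vz_def
    proof (intro allI impI)
      fix n :: int assume n: "n < int (mu b)"
      show "fls_nth (g b b - G b J) n = 0"
      proof (cases "n < 0")
        case True
        then show ?thesis using vzg vz_G0[of b J] by (simp add: vz_def)
      next
        case False
        then have "n \<le> int (mu b - 1)" using n mupos[OF True] by simp
        then show ?thesis using False unfolding J_def by (simp add: G_jet_nth)
      qed
    qed
    have t1: "vz (int (mu b)) (f b - G b (tm b))"
    proof -
      have "f b - G b (tm b) = (g b b - G b J) * U"
        using Unz by (simp add: tm_def J_def G_mult U_def[symmetric] gb algebra_simps)
      then show ?thesis using vz_mult[OF vzJ Usub] by simp
    qed
    have t2: "vz (int (mu b)) (G b (tm a))" if "a \<in> Z - {b}" for a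
    proof -
      have "order b (E a) = mu b" using that by (auto intro: EordB)
      then have "vz (int (mu b)) (G b (E a))" using vz_G[of b "E a"] by simp
      then show ?thesis using vz_mult[OF vz_G0] unfolding tm_def G_mult by fastforce
    qed
    have "G b R0 = G b (tm b) + (\<Sum>a\<in>Z - {b}. G b (tm a))"
      unfolding R0_eq G_sum using sum.remove[OF finZ True] by blast
    then have e: "f b - G b R0 = (f b - G b (tm b)) - (\<Sum>a\<in>Z - {b}. G b (tm a))" by simp
    show ?thesis unfolding e by (rule vz_diff[OF t1 vz_sum[OF t2]])
  qed
  define q0 where "q0 c = (f c - G c R0) / G c D" for c
  have GDnz: "G c D \<noteq> 0" for c by (rule G_nz[OF Dnz])
  have GDsd: "fls_subdegree (G c D) = int (mu c)" for c using subdegree_G[OF Dnz] by (simp add: mu_def)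
  have q0gen: "vz 0 (q0 c)" for c
  proof (cases "f c - G c R0 = 0")
    case True then show ?thesis by (simp add: q0_def vz_zero)
  next
    case False
    then have "int (mu c) \<le> fls_subdegree (f c - G c R0)" using cong[of c] by (simp add: vz_iff)
    then show ?thesis using False GDnz[of c] by (simp add: q0_def vz_iff fls_divide_subdegree GDsd)
  qed
  have q0eq: "f c = G c D * q0 c + G c R0" for c
    using GDnz[of c] by (simp add: q0_def field_simps)
  have uniq: "R = R0 \<and> q = q0"
    if q: "gen_poly q" and R: "degree R < degree D" and eq: "\<forall>a. f a = poly_to_gen D a * q a + poly_to_gen R a"
    for q R
  proof -
    have eq': "f c = G c D * q c + G c R" for c using eq by (simp add: poly_to_gen_G)
    have qv: "vz 0 (q c)" for c using q by (simp add: gen_poly_def vz_def)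
    have RR: "R = R0"
    proof (rule ccontr)
      assume ne: "R \<noteq> R0"
      define S where "S = R - R0"
      have Snz: "S \<noteq> 0" using ne by (simp add: S_def)
      have ord: "order c D \<le> order c S" for c
      proof -
        define w where "w = q0 c - q c"
        have GS: "G c S = G c D * w"
          using eq'[of c] q0eq[of c] unfolding S_def w_def G_diff by (simp add: algebra_simps)
        have "G c S \<noteq> 0" by (rule G_nz[OF Snz])
        then have wnz: "w \<noteq> 0" using GS by auto
        have "vz 0 w" unfolding w_def by (rule vz_diff[OF q0gen qv])
        then have "0 \<le> fls_subdegree w" using wnz by (simp add: vz_iff)
        then have "int (order c D) \<le> fls_subdegree (G c S)"
          using GS wnz GDnz[of c] GDsd[of c] by (simp add: mu_def)
        then show ?thesis using subdegree_G[OF Snz] by simp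
      qed
      have "D dvd S" by (rule order_dvd_complex[OF Dnz Snz]) (simp add: ord)
      then have "degree D \<le> degree S" using Snz by (rule dvd_imp_degree_le)
      moreover have "degree S < degree D"
        unfolding S_def using degree_diff_le_max[of R R0] R degR0 by simp
      ultimately show False by simp
    qed
    have qq: "q c = q0 c" for c
    proof -
      have "f c = G c D * q c + G c R0" using eq'[of c] RR by simp
      then have "G c D * q c + G c R0 = G c D * q0 c + G c R0" using q0eq[of c] by metis
      then have "G c D * q c = G c D * q0 c" by (rule add_right_imp_eq)
      then show ?thesis using GDnz[of c] by simp
    qed
    have "q = q0" by (rule ext) (rule qq)
    then show ?thesis using RR by simp
  qed
  have P0: "gen_poly q0 \<and> degree R0 < degree D \<and> (\<forall>a. f a = poly_to_gen D a * q0 a + poly_to_gen R0 a)"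
    using q0gen degR0 q0eq by (simp add: gen_poly_def vz_def poly_to_gen_G)
  show ?thesis
  proof (intro conjI allI impI)
    show "\<exists>!(q, R). gen_poly q \<and> degree R < degree D \<and>
             (\<forall>a. f a = poly_to_gen D a * q a + poly_to_gen R a)"
    proof (rule ex1I[of _ "(q0, R0)"])
      show "case (q0, R0) of (q, R) \<Rightarrow> gen_poly q \<and> degree R < degree D \<and>
             (\<forall>a. f a = poly_to_gen D a * q a + poly_to_gen R a)" using P0 by simp
    next
      fix y assume "case y of (q, R) \<Rightarrow> gen_poly q \<and> degree R < degree D \<and>
             (\<forall>a. f a = poly_to_gen D a * q a + poly_to_gen R a)"
      moreover obtain q R where y: "y = (q, R)" by (cases y)
      ultimately have "gen_poly q \<and> degree R < degree D \<and>
             (\<forall>a. f a = poly_to_gen D a * q a + poly_to_gen R a)" by simp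
      then have "R = R0 \<and> q = q0" using uniq by blast
      then show "y = (q0, R0)" using y by simp
    qed
  next
    fix q R assume "gen_poly q \<and> degree R < degree D \<and>
             (\<forall>a. f a = poly_to_gen D a * q a + poly_to_gen R a)"
    then have "R = R0 \<and> q = q0" using uniq by blast
    then show "R = taylor_gauss f D" using R0_def by simp
  qed
qed

end
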